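(* Let $n\in\mathbb{N}$, let $f:\mathbb{R}^n\to\mathbb{R}$ be a continuous convex function, let $\mathbf{X}=(X_1,\dots,X_n)$ with $X_i\in\mathcal{E}$, and let $\mathbb{F}$ be a conditional expectation on $\mathcal{E}$. Write $\mathbb{F}\mathbf{X}=(\mathbb{F}X_1,\dots,\mathbb{F}X_n)$. If $f(\mathbf{X})\in\mathcal{E}$, then $\mathbb{F}(f(\mathbf{X}))\ge f(\mathbb{F}\mathbf{X})$.
   Context: Let $\mathcal{E}$ be an order complete vector lattice with a weak order unit $E$, $K$ its Stone space (extremally disconnected compact Hausdorff), and $C^\infty(K)$ the vector lattice (and f-algebra) of continuous functions $K\to[-\infty,\infty]$ finite off a nowhere dense set (identified when equal off a nowhere dense set), which is the universal completion $\mathcal{E}^u$. Fix a Maeda–Ogasawara representation of $\mathcal{E}$ as an order dense ideal of $C^\infty(K)$ with $E$ corresponding to $\mathbf{1}$. For continuous $f:\mathbb{R}^n\to\mathbb{R}$ and $X_1,\dots,X_n\in C^\infty(K)$, $f(\mathbf{X})=f(X_1,\dots,X_n)$ denotes the unique element of $C^\infty(K)$ agreeing with $\omega\mapsto f(X_1(\omega),\dots,X_n(\omega))$ on the open dense set where all $X_i$ are finite. A conditional expectation on $\mathcal{E}$ is an order continuous, strictly positive linear projection $\mathbb{F}:\mathcal{E}\to\mathcal{E}$ whose range is an order complete vector sublattice of $\mathcal{E}$ and with $\mathbb{F}E=E$. *)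

theory Defs
  imports "HOL-Analysis.Analysis"
begin

definition extremally_disconnected :: "'k::topological_space itself \<Rightarrow> bool" where
  "extremally_disconnected _ \<longleftrightarrow> (\<forall>U::'k set. open U \<longrightarrow> open (closure U))"

definition fin_set :: "('k \<Rightarrow> ereal) \<Rightarrow> 'k set" where
  "fin_set g = {x. \<bar>g x\<bar> \<noteq> \<infinity>}"

text \<open>C^infinity(K): continuous functions K -> [-inf,inf] finite off a nowhere dense set.
  Since continuous functions into the Hausdorff space ereal agreeing on a dense set are equal,
  no quotient is needed; the finiteness set is open, so "finite off a nowhere dense set"
  amounts to density of the finiteness set.\<close>
definition Cinf :: "('k::topological_space \<Rightarrow> ereal) set" where
  "Cinf = {g. continuous_on UNIV g \<and> closure (fin_set g) = UNIV}"

definition cadd :: "('k::topological_space \<Rightarrow> ereal) \<Rightarrow> ('k \<Rightarrow> ereal) \<Rightarrow> ('k \<Rightarrow> ereal)" where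
  "cadd g h = (THE s. s \<in> Cinf \<and> (\<forall>x \<in> fin_set g \<inter> fin_set h. s x = g x + h x))"

definition cscale :: "real \<Rightarrow> ('k::topological_space \<Rightarrow> ereal) \<Rightarrow> ('k \<Rightarrow> ereal)" where
  "cscale c g = (THE s. s \<in> Cinf \<and> (\<forall>x \<in> fin_set g. s x = ereal c * g x))"

definition cinf_comp :: "(real^'n \<Rightarrow> real) \<Rightarrow> ('n \<Rightarrow> 'k::topological_space \<Rightarrow> ereal) \<Rightarrow> ('k \<Rightarrow> ereal)" where
  "cinf_comp f X = (THE s. s \<in> Cinf \<and>
     (\<forall>x. (\<forall>i. \<bar>X i x\<bar> \<noteq> \<infinity>) \<longrightarrow> s x = ereal (f (\<chi> i. real_of_ereal (X i x)))))"

definition order_dense_ideal_with_unit :: "('k::topological_space \<Rightarrow> ereal) set \<Rightarrow> bool" where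
  "order_dense_ideal_with_unit \<E> \<longleftrightarrow>
     \<E> \<subseteq> Cinf \<and>
     (\<lambda>_. 0) \<in> \<E> \<and>
     (\<forall>g\<in>\<E>. \<forall>h\<in>\<E>. cadd g h \<in> \<E>) \<and>
     (\<forall>c. \<forall>g\<in>\<E>. cscale c g \<in> \<E>) \<and>
     (\<forall>g\<in>Cinf. \<forall>h\<in>\<E>. (\<lambda>x. \<bar>g x\<bar>) \<le> (\<lambda>x. \<bar>h x\<bar>) \<longrightarrow> g \<in> \<E>) \<and>
     (\<forall>g\<in>Cinf. (\<lambda>_. 0) \<le> g \<and> g \<noteq> (\<lambda>_. 0) \<longrightarrow>
        (\<exists>h\<in>\<E>. (\<lambda>_. 0) \<le> h \<and> h \<noteq> (\<lambda>_. 0) \<and> h \<le> g)) \<and>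
     (\<lambda>_. 1) \<in> \<E>"

definition is_inf_in :: "('k \<Rightarrow> ereal) set \<Rightarrow> ('k \<Rightarrow> ereal) set \<Rightarrow> ('k \<Rightarrow> ereal) \<Rightarrow> bool" where
  "is_inf_in S D m \<longleftrightarrow> m \<in> S \<and> (\<forall>d\<in>D. m \<le> d) \<and> (\<forall>l\<in>S. (\<forall>d\<in>D. l \<le> d) \<longrightarrow> l \<le> m)"

definition is_sup_in :: "('k \<Rightarrow> ereal) set \<Rightarrow> ('k \<Rightarrow> ereal) set \<Rightarrow> ('k \<Rightarrow> ereal) \<Rightarrow> bool" where
  "is_sup_in S D m \<longleftrightarrow> m \<in> S \<and> (\<forall>d\<in>D. d \<le> m) \<and> (\<forall>u\<in>S. (\<forall>d\<in>D. d \<le> u) \<longrightarrow> m \<le> u)"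

text \<open>Conditional expectation on \<E>: order continuous, strictly positive linear projection
  whose range is an order complete vector sublattice, with F 1 = 1.
  Order continuity (for a positive operator): D downward directed with infimum 0 in \<E>
  implies F ` D has infimum 0 in \<E>.\<close>
definition cond_exp :: "('k::topological_space \<Rightarrow> ereal) set \<Rightarrow> (('k \<Rightarrow> ereal) \<Rightarrow> ('k \<Rightarrow> ereal)) \<Rightarrow> bool" where
  "cond_exp \<E> F \<longleftrightarrow>
     (\<forall>g\<in>\<E>. F g \<in> \<E>) \<and>
     (\<forall>g\<in>\<E>. \<forall>h\<in>\<E>. F (cadd g h) = cadd (F g) (F h)) \<and>
     (\<forall>c. \<forall>g\<in>\<E>. F (cscale c g) = cscale c (F g)) \<and>
     (\<forall>g\<in>\<E>. (\<lambda>_. 0) \<le> g \<and> g \<noteq> (\<lambda>_. 0) \<longrightarrow> (\<lambda>_. 0) \<le> F g \<and> F g \<noteq> (\<lambda>_. 0)) \<and>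
     (\<forall>g\<in>\<E>. F (F g) = F g) \<and>
     (\<forall>D. D \<subseteq> \<E> \<and> D \<noteq> {} \<and> (\<forall>a\<in>D. \<forall>b\<in>D. \<exists>c\<in>D. c \<le> a \<and> c \<le> b) \<and>
          is_inf_in \<E> D (\<lambda>_. 0) \<longrightarrow> is_inf_in \<E> (F ` D) (\<lambda>_. 0)) \<and>
     (\<forall>g\<in>F ` \<E>. \<forall>h\<in>F ` \<E>. sup g h \<in> F ` \<E> \<and> inf g h \<in> F ` \<E>) \<and>
     (\<forall>A. A \<subseteq> F ` \<E> \<and> A \<noteq> {} \<and> (\<exists>u\<in>F ` \<E>. \<forall>a\<in>A. a \<le> u) \<longrightarrow>
          (\<exists>s. is_sup_in (F ` \<E>) A s)) \<and>
     F (\<lambda>_. 1) = (\<lambda>_. 1)"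

end

theory Submission
  imports Defs
begin


lemma cont_from_rays:
  fixes G :: "'a::topological_space \<Rightarrow> 'b::linorder_topology"
  assumes "\<And>t. open {x. G x < t}" "\<And>t. open {x. t < G x}"
  shows "continuous_on UNIV G"
proof -
  have "open (G -` U)" if "open U" for U
    using that unfolding open_generated_order
  proof (induct rule: generate_topology.induct)
    case (UN K)
    have "G -` \<Union>K = \<Union>((\<lambda>k. G -` k) ` K)" by blast
    then show ?case using UN.hyps by (metis imageE open_Union)
  next
    case (Basis s) then show ?case using assms by (auto simp: vimage_def)
  qed (auto simp: open_Int)
  then show ?thesis by (simp add: continuous_on_open_vimage)
qed

lemma ext_lemma:
  fixes g :: "'k::topological_space \<Rightarrow> ereal"
  assumes ed: "extremally_disconnected TYPE('k)"
    and U: "open U" and cg: "continuous_on U g"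
  shows "\<exists>G. continuous_on UNIV G \<and> (\<forall>x\<in>U. G x = g x)"
proof -
  have cv: "open (g -` B \<inter> U)" if "open B" for B
    using continuous_on_open_vimage[OF U, of g] cg that by simp
  define A where "A r = closure {x\<in>U. g x < ereal r}" for r
  define G where "G w = Inf {ereal r | r. w \<in> A r}" for w
  have Aopen: "open (A r)" for r
  proof -
    have e1: "{x\<in>U. g x < ereal r} = U \<inter> g -` {..<ereal r}" by auto
    have "open (U \<inter> g -` {..<ereal r})"
      using cv[of "{..<ereal r}"] by (simp add: Int_commute)
    then have "open {x\<in>U. g x < ereal r}" by (simp only: e1)
    then show ?thesis using ed unfolding extremally_disconnected_def A_def by blast
  qed
  have Amono: "r \<le> s \<Longrightarrow> A r \<subseteq> A s" for r s
    unfolding A_def by (rule closure_mono) (auto intro: less_le_trans)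
  have A_le: "g x \<le> ereal r" if "x \<in> U" "x \<in> A r" for x r
  proof (rule ccontr)
    assume "\<not> g x \<le> ereal r"
    hence gx: "ereal r < g x" by simp
    define V where "V = U \<inter> g -` {ereal r<..}"
    have "open V" using cv[of "{ereal r<..}"] V_def by (simp add: Int_commute)
    moreover have "V \<inter> {x\<in>U. g x < ereal r} = {}" unfolding V_def by auto
    ultimately have "V \<inter> A r = {}" unfolding A_def using open_Int_closure_eq_empty by blast
    moreover have "x \<in> V" using gx that unfolding V_def by auto
    ultimately show False using that by auto
  qed
  have GU: "G x = g x" if "x \<in> U" for x
  proof (rule antisym)
    show "G x \<le> g x"
    proof (rule dense_ge)
      fix z assume "g x < z"
      then obtain r where r: "g x < ereal r" "ereal r < z" using ereal_dense2 by blast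
      have "x \<in> A r" unfolding A_def using that r closure_subset by fastforce
      hence "G x \<le> ereal r" unfolding G_def by (auto intro: Inf_lower)
      then show "G x \<le> z" using r by simp
    qed
    show "g x \<le> G x" unfolding G_def using A_le that by (auto intro!: Inf_greatest)
  qed
  have o1: "open {x. G x < t}" for t
  proof -
    have "{x. G x < t} = (\<Union>r\<in>{r. ereal r < t}. A r)"
    proof safe
      fix x assume "G x < t"
      then obtain y where "y \<in> {ereal r | r. x \<in> A r}" "y < t" unfolding G_def Inf_less_iff by blast
      then show "x \<in> (\<Union>r\<in>{r. ereal r < t}. A r)" by auto
    next
      fix x r assume "ereal r < t" "x \<in> A r"
      then have "G x \<le> ereal r" unfolding G_def by (auto intro: Inf_lower)
      then show "G x < t" using \<open>ereal r < t\<close> by simp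
    qed
    then show ?thesis using Aopen by auto
  qed
  have o2: "open {x. t < G x}" for t
  proof -
    have "{x. t < G x} = (\<Union>s\<in>{s. t < ereal s}. - A s)"
    proof safe
      fix x assume "t < G x"
      then obtain s where s: "t < ereal s" "ereal s < G x" using ereal_dense2 by blast
      have "x \<notin> A s"
      proof
        assume "x \<in> A s"
        then have "G x \<le> ereal s" unfolding G_def by (auto intro: Inf_lower)
        then show False using s by simp
      qed
      then show "x \<in> (\<Union>s\<in>{s. t < ereal s}. - A s)" using s by auto
    next
      fix x s assume s: "t < ereal s" "x \<notin> A s"
      have "ereal s \<le> G x" unfolding G_def
      proof (rule Inf_greatest, safe)
        fix r assume "x \<in> A r"
        then have "\<not> r \<le> s" using Amono s by blast
        then show "ereal s \<le> ereal r" by simp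
      qed
      then show "t < G x" using s by simp
    qed
    moreover have "closed (A s)" for s unfolding A_def by simp
    ultimately show ?thesis by (auto simp: open_Compl)
  qed
  show ?thesis using cont_from_rays[OF o1 o2] GU by blast
qed

lemma dense_Int2:
  assumes "open A" "closure A = UNIV" "closure B = UNIV"
  shows "closure (A \<inter> B) = UNIV"
proof -
  have "A \<subseteq> closure (A \<inter> B)" using open_Int_closure_subset[OF assms(1), of B] assms(3) by simp
  then have "closure A \<subseteq> closure (A \<inter> B)" by (metis closure_closure closure_mono)
  then show ?thesis using assms(2) by auto
qed

lemma fin_open:
  assumes "continuous_on UNIV (g :: 'k::topological_space \<Rightarrow> ereal)"
  shows "open (fin_set g)"
proof -
  have "fin_set g = g -` (UNIV - {\<infinity>, -\<infinity>})" unfolding fin_set_def by auto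
  then show ?thesis using open_image_ereal assms by (simp add: open_vimage)
qed

lemma dense_INT:
  assumes "finite I" "\<And>i. i \<in> I \<Longrightarrow> open (A i) \<and> closure (A i) = UNIV"
  shows "open (\<Inter>i\<in>I. A i) \<and> closure (\<Inter>i\<in>I. A i) = UNIV"
  using assms
proof (induction I rule: finite_induct)
  case (insert i I)
  then show ?case using dense_Int2[of "A i" "\<Inter>i\<in>I. A i"] by auto
qed auto

lemma le_dense:
  fixes g h :: "'k::topological_space \<Rightarrow> ereal"
  assumes "continuous_on UNIV g" "continuous_on UNIV h" "closure D = UNIV" "\<forall>x\<in>D. g x \<le> h x"
  shows "g \<le> h"
proof -
  have "closed {x. g x \<le> h x}" using closed_Collect_le[OF assms(1,2)] .
  then have "closure D \<subseteq> {x. g x \<le> h x}" by (rule closure_minimal[rotated]) (use assms(4) in auto)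
  then show ?thesis using assms(3) by (auto simp: le_fun_def)
qed

lemma cinf_unique:
  fixes s t :: "'k::t2_space \<Rightarrow> ereal"
  assumes "s \<in> Cinf" "t \<in> Cinf" "closure D = UNIV" "\<forall>x\<in>D. s x = t x"
  shows "s = t"
  using le_dense[of s t D] le_dense[of t s D] assms unfolding Cinf_def by auto

lemma cont_real:
  assumes "continuous_on UNIV (g :: 'k::topological_space \<Rightarrow> ereal)"
  shows "continuous_on (fin_set g) (\<lambda>x. real_of_ereal (g x))"
  by (rule continuous_on_compose2[OF continuous_on_real continuous_on_subset[OF assms]])
     (auto simp: fin_set_def)

lemma exist_cinf:
  fixes U :: "'k::t2_space set"
  assumes ed: "extremally_disconnected TYPE('k)" and "open U" "closure U = UNIV"
    and "continuous_on U \<phi>" "\<forall>x\<in>U. \<psi> x = ereal (\<phi> x)"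
  shows "\<exists>!s. s \<in> Cinf \<and> (\<forall>x\<in>U. s x = \<psi> x)"
proof -
  have "continuous_on U (\<lambda>x. ereal (\<phi> x))" using assms(4) by (intro continuous_intros)
  then obtain G where G: "continuous_on UNIV G" "\<forall>x\<in>U. G x = ereal (\<phi> x)"
    using ext_lemma[OF ed assms(2)] by blast
  have "U \<subseteq> fin_set G" using G(2) unfolding fin_set_def by auto
  then have "closure (fin_set G) = UNIV" using assms(3) closure_mono by blast
  then have GC: "G \<in> Cinf \<and> (\<forall>x\<in>U. G x = \<psi> x)" using G assms(5) unfolding Cinf_def by auto
  show ?thesis
  proof (rule ex1I[of _ G])
    fix s assume "s \<in> Cinf \<and> (\<forall>x\<in>U. s x = \<psi> x)"
    then show "s = G" using cinf_unique[of s G U] GC assms(3) by auto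
  qed (use GC in auto)
qed

lemma cadd_prop:
  fixes g h :: "'k::t2_space \<Rightarrow> ereal"
  assumes ed: "extremally_disconnected TYPE('k)" and "g \<in> Cinf" "h \<in> Cinf"
  shows "cadd g h \<in> Cinf \<and> (\<forall>x\<in>fin_set g \<inter> fin_set h. cadd g h x = g x + h x)"
proof -
  have c: "continuous_on UNIV g" "continuous_on UNIV h" "closure (fin_set g) = UNIV" "closure (fin_set h) = UNIV"
    using assms unfolding Cinf_def by auto
  have "\<exists>!s. s \<in> Cinf \<and> (\<forall>x\<in>fin_set g \<inter> fin_set h. s x = g x + h x)"
  proof (rule exist_cinf[OF ed, where \<phi> = "\<lambda>x. real_of_ereal (g x) + real_of_ereal (h x)"])
    show "open (fin_set g \<inter> fin_set h)" using fin_open c by auto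
    show "closure (fin_set g \<inter> fin_set h) = UNIV" using dense_Int2 fin_open c by auto
    show "continuous_on (fin_set g \<inter> fin_set h) (\<lambda>x. real_of_ereal (g x) + real_of_ereal (h x))"
      using continuous_on_subset[OF cont_real[OF c(1)]] continuous_on_subset[OF cont_real[OF c(2)]]
      by (intro continuous_intros) auto
    show "\<forall>x\<in>fin_set g \<inter> fin_set h. g x + h x = ereal (real_of_ereal (g x) + real_of_ereal (h x))"
      unfolding fin_set_def by (auto simp: ereal_real)
  qed
  from theI'[OF this] show ?thesis unfolding cadd_def by simp
qed

lemma cscale_prop:
  fixes g :: "'k::t2_space \<Rightarrow> ereal"
  assumes ed: "extremally_disconnected TYPE('k)" and "g \<in> Cinf"
  shows "cscale c g \<in> Cinf \<and> (\<forall>x\<in>fin_set g. cscale c g x = ereal c * g x)"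
proof -
  have c: "continuous_on UNIV g" "closure (fin_set g) = UNIV"
    using assms unfolding Cinf_def by auto
  have "\<exists>!s. s \<in> Cinf \<and> (\<forall>x\<in>fin_set g. s x = ereal c * g x)"
  proof (rule exist_cinf[OF ed, where \<phi> = "\<lambda>x. c * real_of_ereal (g x)"])
    show "open (fin_set g)" using fin_open c by auto
    show "closure (fin_set g) = UNIV" using c by auto
    show "continuous_on (fin_set g) (\<lambda>x. c * real_of_ereal (g x))"
      using cont_real[OF c(1)] by (intro continuous_intros) auto
    show "\<forall>x\<in>fin_set g. ereal c * g x = ereal (c * real_of_ereal (g x))"
      unfolding fin_set_def by (auto simp: ereal_real)
  qed
  from theI'[OF this] show ?thesis unfolding cscale_def by simp
qed

lemma cinf_comp_prop:
  fixes X :: "'n::finite \<Rightarrow> 'k::t2_space \<Rightarrow> ereal"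
  assumes ed: "extremally_disconnected TYPE('k)" and "\<forall>i. X i \<in> Cinf" and fc: "continuous_on UNIV f"
  shows "cinf_comp f X \<in> Cinf \<and> (\<forall>x. (\<forall>i. \<bar>X i x\<bar> \<noteq> \<infinity>) \<longrightarrow> cinf_comp f X x = ereal (f (\<chi> i. real_of_ereal (X i x))))"
proof -
  define U where "U = (\<Inter>i\<in>UNIV. fin_set (X i))"
  have c: "continuous_on UNIV (X i)" "closure (fin_set (X i)) = UNIV" for i
    using assms unfolding Cinf_def by auto
  have U: "open U \<and> closure U = UNIV" unfolding U_def using dense_INT[of UNIV "\<lambda>i. fin_set (X i)"] fin_open c by auto
  have eq: "(\<lambda>s. s \<in> Cinf \<and> (\<forall>x. (\<forall>i. \<bar>X i x\<bar> \<noteq> \<infinity>) \<longrightarrow> s x = ereal (f (\<chi> i. real_of_ereal (X i x)))))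
      = (\<lambda>s. s \<in> Cinf \<and> (\<forall>x\<in>U. s x = ereal (f (\<chi> i. real_of_ereal (X i x)))))"
    unfolding U_def fin_set_def by auto
  have "\<exists>!s. s \<in> Cinf \<and> (\<forall>x\<in>U. s x = ereal (f (\<chi> i. real_of_ereal (X i x))))"
  proof (rule exist_cinf[OF ed])
    show "open U" "closure U = UNIV" using U by auto
    have "continuous_on U (\<lambda>x. \<chi> i. real_of_ereal (X i x))"
      using continuous_on_subset[OF cont_real[OF c(1)]] unfolding U_def
      by (intro continuous_on_vec_lambda) (meson INT_lower UNIV_I)
    then show "continuous_on U (\<lambda>x. f (\<chi> i. real_of_ereal (X i x)))"
      using continuous_on_compose2[OF fc] by blast
  qed auto
  from theI'[OF this[folded eq]] show ?thesis unfolding cinf_comp_def by simp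
qed



lemma affine_minorant:
  fixes f :: "real^'n \<Rightarrow> real"
  assumes fc: "continuous_on UNIV f" and cv: "convex_on UNIV f" and e: "e > 0"
  shows "\<exists>a c. (\<forall>x. c + inner a x \<le> f x) \<and> f y - e < c + inner a y"
proof -
  define S where "S = {p :: (real^'n) \<times> real. f (fst p) \<le> snd p}"
  have "closed S" unfolding S_def
    by (rule closed_Collect_le) (auto intro!: continuous_intros continuous_on_compose2[OF fc])
  moreover have "convex S" unfolding S_def convex_alt
  proof safe
    fix a b :: "real^'n" and s t u :: real
    assume hh: "f (fst (a, s)) \<le> snd (a, s)" "f (fst (b, t)) \<le> snd (b, t)" "0 \<le> u" "u \<le> 1"
    then have "f ((1 - u) *\<^sub>R a + u *\<^sub>R b) \<le> (1 - u) * f a + u * f b"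
         "(1 - u) * f a + u * f b \<le> (1 - u) * s + u * t"
      using convex_onD[OF cv, of u a b] apply simp
      by (rule add_mono; rule mult_left_mono) (use hh in auto)
    then show "f (fst ((1 - u) *\<^sub>R (a, s) + u *\<^sub>R (b, t))) \<le> snd ((1 - u) *\<^sub>R (a, s) + u *\<^sub>R (b, t))"
      by simp
  qed
  moreover have "(y, f y - e) \<notin> S" using e unfolding S_def by auto
  ultimately obtain w b where wb: "inner w (y, f y - e) < b" "\<forall>p\<in>S. b < inner w p"
    using separating_hyperplane_closed_point by blast
  obtain a a0 where w: "w = (a, a0)" by fastforce
  have h1: "inner a y + a0 * (f y - e) < b" using wb(1) w by simp
  have h2: "b < inner a x + a0 * t" if "f x \<le> t" for x t using wb(2) w that unfolding S_def by auto
  have "b < inner a y + a0 * f y" using h2[of y "f y"] by simp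
  with h1 have "a0 * e > 0" by (simp add: algebra_simps)
  then have a0: "a0 > 0" using e by (simp add: zero_less_mult_iff)
  show ?thesis
  proof (intro exI conjI allI)
    fix x
    have "b < inner a x + a0 * f x" using h2[of x "f x"] by simp
    then show "b / a0 + inner (- (1/a0) *\<^sub>R a) x \<le> f x" using a0
      by (simp add: field_simps)
  next
    show "f y - e < b / a0 + inner (- (1/a0) *\<^sub>R a) y" using h1 a0
      by (simp add: field_simps)
  qed
qed

lemma eval_add:
  fixes P Q :: "'k::t2_space \<Rightarrow> ereal"
  assumes ed: "extremally_disconnected TYPE('k)" and "P \<in> Cinf" "Q \<in> Cinf" "P x = ereal p" "Q x = ereal q"
  shows "cadd P Q x = ereal (p + q)"
  using cadd_prop[OF ed assms(2,3)] assms(4,5) unfolding fin_set_def by auto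

lemma eval_scale:
  fixes P :: "'k::t2_space \<Rightarrow> ereal"
  assumes ed: "extremally_disconnected TYPE('k)" and "P \<in> Cinf" "P x = ereal p"
  shows "cscale r P x = ereal (r * p)"
  using cscale_prop[OF ed assms(2), of r] assms(3) unfolding fin_set_def by auto

primrec lsum :: "('n \<Rightarrow> real) \<Rightarrow> ('n \<Rightarrow> 'k::topological_space \<Rightarrow> ereal) \<Rightarrow> 'n list \<Rightarrow> 'k \<Rightarrow> ereal" where
  "lsum a X [] = (\<lambda>_. 0)"
| "lsum a X (i # is) = cadd (cscale (a i) (X i)) (lsum a X is)"

lemma lsum_prop:
  fixes X :: "'n \<Rightarrow> 'k::t2_space \<Rightarrow> ereal"
  assumes ed: "extremally_disconnected TYPE('k)" and E: "order_dense_ideal_with_unit \<E>"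
    and X: "\<forall>i. X i \<in> \<E>"
  shows "lsum a X is \<in> \<E> \<and> (\<forall>x. (\<forall>i. \<bar>X i x\<bar> \<noteq> \<infinity>) \<longrightarrow>
            lsum a X is x = ereal (\<Sum>i\<leftarrow>is. a i * real_of_ereal (X i x)))"
proof (induction "is")
  case Nil
  then show ?case using E unfolding order_dense_ideal_with_unit_def by simp
next
  case (Cons j "is")
  have sub: "\<E> \<subseteq> Cinf" using E unfolding order_dense_ideal_with_unit_def by simp
  have m1: "cscale (a j) (X j) \<in> \<E>" using E X unfolding order_dense_ideal_with_unit_def by simp
  have m: "lsum a X (j # is) \<in> \<E>" using E m1 Cons unfolding order_dense_ideal_with_unit_def by simp
  have "lsum a X (j # is) x = ereal (\<Sum>i\<leftarrow>j # is. a i * real_of_ereal (X i x))"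
    if fx: "\<forall>i. \<bar>X i x\<bar> \<noteq> \<infinity>" for x
  proof -
    have Xj: "X j x = ereal (real_of_ereal (X j x))" using fx by (simp add: ereal_real)
    have XjC: "X j \<in> Cinf" using X sub by auto
    have cs: "cscale (a j) (X j) x = ereal (a j * real_of_ereal (X j x))"
      by (rule eval_scale[OF ed XjC Xj])
    have ls: "lsum a X is x = ereal (\<Sum>i\<leftarrow>is. a i * real_of_ereal (X i x))" using Cons fx by blast
    have lC: "lsum a X is \<in> Cinf" using Cons sub by auto
    have m1C: "cscale (a j) (X j) \<in> Cinf" using m1 sub by auto
    have "cadd (cscale (a j) (X j)) (lsum a X is) x = ereal (a j * real_of_ereal (X j x) + (\<Sum>i\<leftarrow>is. a i * real_of_ereal (X i x)))"
      by (rule eval_add[OF ed m1C lC cs ls])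
    then show ?thesis by simp
  qed
  then show ?case using m by blast
qed

lemma cscale0:
  fixes g :: "'k::t2_space \<Rightarrow> ereal"
  assumes ed: "extremally_disconnected TYPE('k)" and "g \<in> Cinf"
  shows "cscale 0 g = (\<lambda>_. 0)"
proof -
  have z: "(\<lambda>_. 0::ereal) \<in> (Cinf :: ('k \<Rightarrow> ereal) set)" unfolding Cinf_def fin_set_def by auto
  show ?thesis using cinf_unique[of "cscale 0 g" "\<lambda>_. 0" "fin_set g"] cscale_prop[OF ed assms(2), of 0] z assms(2)
    unfolding Cinf_def by auto
qed

lemma F0:
  fixes F :: "('k::t2_space \<Rightarrow> ereal) \<Rightarrow> ('k \<Rightarrow> ereal)"
  assumes ed: "extremally_disconnected TYPE('k)" and E: "order_dense_ideal_with_unit \<E>" and F: "cond_exp \<E> F"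
  shows "F (\<lambda>_. 0) = (\<lambda>_. 0)"
proof -
  have sub: "\<E> \<subseteq> Cinf" and z: "(\<lambda>_. 0) \<in> \<E>" using E unfolding order_dense_ideal_with_unit_def by auto
  have "F (\<lambda>_. 0) \<in> \<E>" using F z unfolding cond_exp_def by auto
  have "F (\<lambda>_. 0) = F (cscale 0 (\<lambda>_. 0))" using cscale0[OF ed, of "\<lambda>_. 0"] sub z by auto
  also have "\<dots> = cscale 0 (F (\<lambda>_. 0))" using F z unfolding cond_exp_def by auto
  also have "\<dots> = (\<lambda>_. 0)" using cscale0[OF ed] \<open>F (\<lambda>_. 0) \<in> \<E>\<close> sub by auto
  finally show ?thesis .
qed

lemma F_lsum:
  fixes X :: "'n \<Rightarrow> 'k::t2_space \<Rightarrow> ereal"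
  assumes ed: "extremally_disconnected TYPE('k)" and E: "order_dense_ideal_with_unit \<E>"
    and F: "cond_exp \<E> F" and X: "\<forall>i. X i \<in> \<E>"
  shows "F (lsum a X is) = lsum a (\<lambda>i. F (X i)) is"
proof (induction "is")
  case Nil
  then show ?case using F0[OF ed E F] by simp
next
  case (Cons j "is")
  have m1: "cscale (a j) (X j) \<in> \<E>" using E X unfolding order_dense_ideal_with_unit_def by simp
  have m2: "lsum a X is \<in> \<E>" using lsum_prop[OF ed E X] by blast
  show ?case using F m1 m2 X Cons unfolding cond_exp_def by simp
qed



lemma F_pos:
  assumes F: "cond_exp \<E> F" and F0: "F (\<lambda>_. 0) = (\<lambda>_. 0)" and "W \<in> \<E>" "(\<lambda>_. 0) \<le> W"
  shows "(\<lambda>_. 0) \<le> F W"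
proof (cases "W = (\<lambda>_. 0)")
  case True then show ?thesis using F0 by simp
next
  case False
  have pos: "\<forall>g\<in>\<E>. (\<lambda>_. 0) \<le> g \<and> g \<noteq> (\<lambda>_. 0) \<longrightarrow> (\<lambda>_. 0) \<le> F g \<and> F g \<noteq> (\<lambda>_. 0)"
    using F unfolding cond_exp_def by (elim conjE) assumption
  then show ?thesis using assms(3,4) False by blast
qed

lemma sum_inner:
  fixes xs :: "'n::finite list"
  assumes "set xs = UNIV" "distinct xs"
  shows "(\<Sum>i\<leftarrow>xs. (a :: real^'n) $ i * v $ i) = inner a v"
  using assms by (simp add: sum_list_distinct_conv_sum_set inner_vec_def inner_real_def)

theorem mainTheorem9:
  fixes \<E> :: "('k::t2_space \<Rightarrow> ereal) set"
    and F :: "('k \<Rightarrow> ereal) \<Rightarrow> ('k \<Rightarrow> ereal)"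
    and f :: "real^'n \<Rightarrow> real"
    and X :: "'n \<Rightarrow> 'k \<Rightarrow> ereal"
  assumes "compact (UNIV :: 'k set)"
    and "extremally_disconnected TYPE('k)"
    and "order_dense_ideal_with_unit \<E>"
    and "continuous_on UNIV f"
    and "convex_on UNIV f"
    and "\<forall>i. X i \<in> \<E>"
    and "cond_exp \<E> F"
    and "cinf_comp f X \<in> \<E>"
  shows "cinf_comp f (\<lambda>i. F (X i)) \<le> F (cinf_comp f X)"
proof -
  note ed = assms(2) and E = assms(3) and fc = assms(4) and cv = assms(5) and XE = assms(6)
    and F = assms(7)
  have sub: "\<E> \<subseteq> Cinf" using E unfolding order_dense_ideal_with_unit_def by (elim conjE) assumption
  have one: "(\<lambda>_. 1) \<in> \<E>" using E unfolding order_dense_ideal_with_unit_def by (elim conjE) assumption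
  have Eadd0: "\<forall>g\<in>\<E>. \<forall>h\<in>\<E>. cadd g h \<in> \<E>" using E unfolding order_dense_ideal_with_unit_def by (elim conjE) assumption
  have Esc0: "\<forall>c. \<forall>g\<in>\<E>. cscale c g \<in> \<E>" using E unfolding order_dense_ideal_with_unit_def by (elim conjE) assumption
  have Eadd: "\<And>g h. g \<in> \<E> \<Longrightarrow> h \<in> \<E> \<Longrightarrow> cadd g h \<in> \<E>" using Eadd0 by blast
  have Esc: "\<And>c g. g \<in> \<E> \<Longrightarrow> cscale c g \<in> \<E>" using Esc0 by blast
  have FE0: "\<forall>g\<in>\<E>. F g \<in> \<E>" using F unfolding cond_exp_def by (elim conjE) assumption
  have Fadd0: "\<forall>g\<in>\<E>. \<forall>h\<in>\<E>. F (cadd g h) = cadd (F g) (F h)" using F unfolding cond_exp_def by (elim conjE) assumption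
  have Fsc0: "\<forall>c. \<forall>g\<in>\<E>. F (cscale c g) = cscale c (F g)" using F unfolding cond_exp_def by (elim conjE) assumption
  have F1: "F (\<lambda>_. 1) = (\<lambda>_. 1)" using F unfolding cond_exp_def by (elim conjE) assumption
  have FE: "\<And>g. g \<in> \<E> \<Longrightarrow> F g \<in> \<E>" using FE0 by blast
  have Fadd: "\<And>g h. g \<in> \<E> \<Longrightarrow> h \<in> \<E> \<Longrightarrow> F (cadd g h) = cadd (F g) (F h)" using Fadd0 by blast
  have Fsc: "\<And>c g. g \<in> \<E> \<Longrightarrow> F (cscale c g) = cscale c (F g)" using Fsc0 by blast
  have F00: "F (\<lambda>_. 0) = (\<lambda>_. 0)" using F0[OF ed E F] .
  define Y where "Y i = F (X i)" for i
  have Yeq: "(\<lambda>i. F (X i)) = Y" by (rule ext) (simp add: Y_def)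
  have YE: "\<forall>i. Y i \<in> \<E>" using FE XE unfolding Y_def by auto
  have XC: "\<forall>i. X i \<in> Cinf" and YC: "\<forall>i. Y i \<in> Cinf" using XE YE sub by auto
  define Z where "Z = cinf_comp f X"
  have ZE: "Z \<in> \<E>" using assms(8) Z_def by simp
  have Zp: "\<forall>x. (\<forall>i. \<bar>X i x\<bar> \<noteq> \<infinity>) \<longrightarrow> Z x = ereal (f (\<chi> i. real_of_ereal (X i x)))"
    using cinf_comp_prop[OF ed XC fc] Z_def by simp
  have Zcp: "cinf_comp f Y \<in> Cinf" "\<forall>x. (\<forall>i. \<bar>Y i x\<bar> \<noteq> \<infinity>) \<longrightarrow> cinf_comp f Y x = ereal (f (\<chi> i. real_of_ereal (Y i x)))"
    using cinf_comp_prop[OF ed YC fc] by auto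
  have FZE: "F Z \<in> \<E>" using FE ZE by simp
  have FZC: "F Z \<in> Cinf" using FZE sub by auto
  have cX: "continuous_on UNIV (X i)" "closure (fin_set (X i)) = UNIV"
       and cY: "continuous_on UNIV (Y i)" "closure (fin_set (Y i)) = UNIV" for i
    using XC YC unfolding Cinf_def by auto
  define UX where "UX = (\<Inter>i\<in>UNIV. fin_set (X i))"
  define UY where "UY = (\<Inter>i\<in>UNIV. fin_set (Y i))"
  have UX: "open UX \<and> closure UX = UNIV" unfolding UX_def using dense_INT[of UNIV "\<lambda>i. fin_set (X i)"] fin_open cX by auto
  have UY: "open UY \<and> closure UY = UNIV" unfolding UY_def using dense_INT[of UNIV "\<lambda>i. fin_set (Y i)"] fin_open cY by auto
  define D where "D = UY \<inter> fin_set (F Z)"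
  have D: "closure D = UNIV" unfolding D_def using dense_Int2[of UY "fin_set (F Z)"] UY FZC
    unfolding Cinf_def by auto
  obtain xs :: "'n list" where xs: "set xs = UNIV" "distinct xs" using finite_distinct_list[of "UNIV :: 'n set"] by auto
  have key: "cinf_comp f Y w \<le> F Z w" if w: "w \<in> D" for w
  proof -
    define y0 where "y0 = (\<chi> i. real_of_ereal (Y i w))"
    have Yfin: "\<forall>i. \<bar>Y i w\<bar> \<noteq> \<infinity>" using w unfolding D_def UY_def fin_set_def by auto
    have lhs: "cinf_comp f Y w = ereal (f y0)" using Zcp(2) Yfin y0_def by simp
    define r where "r = real_of_ereal (F Z w)"
    have rhs: "F Z w = ereal r" using w unfolding D_def fin_set_def r_def by (auto simp: ereal_real)
    have "f y0 \<le> r"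
    proof (rule field_le_epsilon)
      fix e :: real assume e: "0 < e"
      obtain a c where ac: "\<forall>x. c + inner a x \<le> f x" "f y0 - e < c + inner a y0"
        using affine_minorant[OF fc cv e] by blast
      define av where "av i = a $ i" for i
      define L where "L = cadd (cscale c (\<lambda>_. 1)) (lsum av X xs)"
      define W where "W = cadd Z (cscale (-1) L)"
      have LE: "L \<in> \<E>" unfolding L_def using Eadd Esc one lsum_prop[OF ed E XE] by blast
      have WE: "W \<in> \<E>" unfolding W_def using Eadd Esc LE ZE by blast
      have Wpos: "0 \<le> W x" if x: "x \<in> UX" for x
      proof -
        define vx where "vx = (\<chi> i. real_of_ereal (X i x))"
        have Xfin: "\<forall>i. \<bar>X i x\<bar> \<noteq> \<infinity>" using x unfolding UX_def fin_set_def by auto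
        have Zx: "Z x = ereal (f vx)" using Zp Xfin vx_def by simp
        have lx: "lsum av X xs x = ereal (inner a vx)"
          using lsum_prop[OF ed E XE, of av xs] Xfin sum_inner[OF xs, of a vx]
          unfolding av_def vx_def by simp
        have Lx: "L x = ereal (c * 1 + inner a vx)" unfolding L_def
          by (rule eval_add[OF ed]) (use sub one Esc lsum_prop[OF ed E XE] lx eval_scale[OF ed, of "\<lambda>_. 1" x 1 c] in auto)
        have Wx: "W x = ereal (f vx + (-1) * (c * 1 + inner a vx))" unfolding W_def
          by (rule eval_add[OF ed]) (use sub ZE LE Esc Zx eval_scale[OF ed, of L x _ "-1"] Lx in auto)
        show ?thesis using Wx ac(1)[rule_format, of vx] by simp
      qed
      have W0: "(\<lambda>_. 0) \<le> W"
        by (rule le_dense[of _ _ UX]) (use WE sub UX Wpos in \<open>auto simp: Cinf_def\<close>)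
      have FW0: "(\<lambda>_. 0) \<le> F W" using F_pos[OF F F00 WE W0] .
      have FL: "F L = cadd (cscale c (\<lambda>_. 1)) (lsum av Y xs)"
      proof -
        have lXE: "lsum av X xs \<in> \<E>" using lsum_prop[OF ed E XE] by blast
        show ?thesis unfolding L_def
          by (simp add: Fadd[OF Esc[OF one] lXE] Fsc[OF one] F1 F_lsum[OF ed E F XE] Yeq)
      qed
      have FW: "F W = cadd (F Z) (cscale (-1) (cadd (cscale c (\<lambda>_. 1)) (lsum av Y xs)))"
        unfolding W_def using Fadd Fsc ZE LE Esc FL by simp
      have ly: "lsum av Y xs w = ereal (inner a y0)"
        using lsum_prop[OF ed E YE, of av xs] Yfin sum_inner[OF xs, of a y0]
        unfolding av_def y0_def by simp
      have Lw: "cadd (cscale c (\<lambda>_. 1)) (lsum av Y xs) w = ereal (c * 1 + inner a y0)"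
        by (rule eval_add[OF ed]) (use sub one Esc lsum_prop[OF ed E YE] ly eval_scale[OF ed, of "\<lambda>_. 1" w 1 c] in auto)
      have LYE: "cadd (cscale c (\<lambda>_. 1)) (lsum av Y xs) \<in> \<E>" using Eadd Esc one lsum_prop[OF ed E YE] by blast
      have FWw: "F W w = ereal (r + (-1) * (c * 1 + inner a y0))" unfolding FW
        by (rule eval_add[OF ed]) (use sub FZE LYE Esc rhs eval_scale[OF ed, of _ w _ "-1"] Lw in auto)
      have "0 \<le> F W w" using FW0 by (auto simp: le_fun_def)
      then have "c + inner a y0 \<le> r" using FWw by simp
      then show "f y0 \<le> r + e" using ac(2) by simp
    qed
    then show ?thesis using lhs rhs by simp
  qed
  have "cinf_comp f Y \<le> F Z"
    by (rule le_dense[OF _ _ D]) (use Zcp(1) FZC key in \<open>auto simp: Cinf_def\<close>)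
  then show ?thesis using Yeq Z_def by simp
qed

end
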